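(* Let $n\ge6$ and let $\mathfrak g$ be an $n$-dimensional filiform Lie algebra with associated triple $(n-2,n-2,n)$. Then $$\mathrm{HP}_{\mathfrak g}(t,s)=\mathrm{HP}^{(0)}_{\mathfrak g}(t,s)+t^2s^3+t^3s^2+t^2s^2.$$
   Context: All Lie algebras are over $\mathbb C$; $C^1\mathfrak g=\mathfrak g$, $C^k\mathfrak g=[C^{k-1}\mathfrak g,\mathfrak g]$. A Lie algebra is filiform if $\dim\mathfrak g=n\ge2$ and $\dim C^k\mathfrak g=n-k$ for $2\le k\le n$. An adapted basis of a filiform $\mathfrak g$ is a basis $\{e_1,\dots,e_n\}$ with $[e_1,e_h]=e_{h-1}$ ($3\le h\le n$), $[e_2,e_h]=0$ ($1\le h\le n$), $[e_3,e_h]=0$ ($2\le h\le n$). For non-model filiform $\mathfrak g$, $z_1=\min\{k\ge4:[e_k,e_n]\ne0\}$, $z_2=\min\{k\ge4:[e_k,e_{k+1}]\ne0\}$ (in any adapted basis) are isomorphism invariants; $(z_1,z_2,n)$ is the associated triple. The Hilbert polynomial is $\mathrm{HP}_{\mathfrak g}(t,s)=\sum_{k,\ell\ge1}\dim[C^k\mathfrak g,C^\ell\mathfrak g]\,t^ks^\ell$, and for filiform $\mathfrak g$ of dimension $n$, $\mathrm{HP}^{(0)}_{\mathfrak g}(t,s)=(n-2)ts+\sum_{2\le k\le n-2}(n-k-1)(t^ks+ts^k)$ (the part of $\mathrm{HP}_{\mathfrak g}$ with $k=1$ or $\ell=1$). *)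

theory Defs
  imports "HOL-Analysis.Analysis"
begin

text \<open>An n-dimensional complex Lie algebra is modelled as the complex vector space
  complex^'n (with n = CARD('n)) together with a bracket B.\<close>

type_synonym 'n lie_bracket = "complex^'n \<Rightarrow> complex^'n \<Rightarrow> complex^'n"

definition lie_algebra :: "'n::finite lie_bracket \<Rightarrow> bool" where
  "lie_algebra B \<longleftrightarrow>
     (\<forall>x y z. B (x + y) z = B x z + B y z) \<and>
     (\<forall>x y z. B x (y + z) = B x y + B x z) \<and>
     (\<forall>c x y. B (c *s x) y = c *s B x y) \<and>
     (\<forall>c x y. B x (c *s y) = c *s B x y) \<and>
     (\<forall>x. B x x = 0) \<and>
     (\<forall>x y z. B x (B y z) + B y (B z x) + B z (B x y) = 0)"

definition lie_bracket_sub :: "'n::finite lie_bracket \<Rightarrow> (complex^'n) set \<Rightarrow> (complex^'n) set \<Rightarrow> (complex^'n) set" where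
  "lie_bracket_sub B U V = vec.span {B u v | u v. u \<in> U \<and> v \<in> V}"

text \<open>Lower central series: C^1 g = g, C^k g = [C^(k-1) g, g] (index 0 unused).\<close>
fun lcs :: "'n::finite lie_bracket \<Rightarrow> nat \<Rightarrow> (complex^'n) set" where
  "lcs B 0 = UNIV"
| "lcs B (Suc 0) = UNIV"
| "lcs B (Suc (Suc k)) = lie_bracket_sub B (lcs B (Suc k)) UNIV"

definition filiform :: "'n::finite lie_bracket \<Rightarrow> bool" where
  "filiform B \<longleftrightarrow> lie_algebra B \<and> CARD('n) \<ge> 2 \<and>
     (\<forall>k. 2 \<le> k \<and> k \<le> CARD('n) \<longrightarrow> vec.dim (lcs B k) = CARD('n) - k)"

definition adapted_basis :: "'n::finite lie_bracket \<Rightarrow> (nat \<Rightarrow> complex^'n) \<Rightarrow> bool" where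
  "adapted_basis B e \<longleftrightarrow>
     inj_on e {1..CARD('n)} \<and> vec.independent (e ` {1..CARD('n)}) \<and>
     vec.span (e ` {1..CARD('n)}) = UNIV \<and>
     (\<forall>h. 3 \<le> h \<and> h \<le> CARD('n) \<longrightarrow> B (e 1) (e h) = e (h - 1)) \<and>
     (\<forall>h. 1 \<le> h \<and> h \<le> CARD('n) \<longrightarrow> B (e 2) (e h) = 0) \<and>
     (\<forall>h. 2 \<le> h \<and> h \<le> CARD('n) \<longrightarrow> B (e 3) (e h) = 0)"

definition is_min_ge4 :: "(nat \<Rightarrow> bool) \<Rightarrow> nat \<Rightarrow> bool" where
  "is_min_ge4 P z \<longleftrightarrow> 4 \<le> z \<and> P z \<and> (\<forall>k. 4 \<le> k \<and> k < z \<longrightarrow> \<not> P k)"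

text \<open>Associated triple (z1,z2,n) computed in an adapted basis e.\<close>
definition has_triple :: "'n::finite lie_bracket \<Rightarrow> (nat \<Rightarrow> complex^'n) \<Rightarrow> nat \<Rightarrow> nat \<Rightarrow> bool" where
  "has_triple B e z1 z2 \<longleftrightarrow>
     is_min_ge4 (\<lambda>k. k \<le> CARD('n) \<and> B (e k) (e CARD('n)) \<noteq> 0) z1 \<and>
     is_min_ge4 (\<lambda>k. k + 1 \<le> CARD('n) \<and> B (e k) (e (k + 1)) \<noteq> 0) z2"

text \<open>Hilbert polynomial evaluated at (t,s), truncated at N (terms with k>n or l>n vanish).\<close>
definition HP_trunc :: "'n::finite lie_bracket \<Rightarrow> nat \<Rightarrow> complex \<Rightarrow> complex \<Rightarrow> complex" where
  "HP_trunc B N t s = (\<Sum>k=1..N. \<Sum>l=1..N.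
      of_nat (vec.dim (lie_bracket_sub B (lcs B k) (lcs B l))) * t ^ k * s ^ l)"

definition HP0 :: "nat \<Rightarrow> complex \<Rightarrow> complex \<Rightarrow> complex" where
  "HP0 n t s = of_nat (n - 2) * t * s +
     (\<Sum>k=2..n-2. of_nat (n - k - 1) * (t ^ k * s + t * s ^ k))"

end

theory Submission
  imports Defs
begin


lemma la_addL: "lie_algebra B \<Longrightarrow> B (x + y) z = B x z + B y z" unfolding lie_algebra_def by blast
lemma la_addR: "lie_algebra B \<Longrightarrow> B x (y + z) = B x y + B x z" unfolding lie_algebra_def by blast
lemma la_scL: "lie_algebra B \<Longrightarrow> B (c *s x) y = c *s B x y" unfolding lie_algebra_def by blast
lemma la_scR: "lie_algebra B \<Longrightarrow> B x (c *s y) = c *s B x y" unfolding lie_algebra_def by blast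
lemma la_self: "lie_algebra B \<Longrightarrow> B x x = 0" unfolding lie_algebra_def by blast
lemma la_jac: "lie_algebra B \<Longrightarrow> B x (B y z) + B y (B z x) + B z (B x y) = 0" unfolding lie_algebra_def by blast

lemma la_zeroL: "lie_algebra B \<Longrightarrow> B 0 y = 0"
  using la_addL[of B 0 0 y] by simp
lemma la_zeroR: "lie_algebra B \<Longrightarrow> B y 0 = 0"
  using la_addR[of B y 0 0] by simp
lemma la_anti: "lie_algebra B \<Longrightarrow> B x y = - B y x"
proof -
  assume L: "lie_algebra B"
  have "0 = B (x+y) (x+y)" using la_self[OF L] by simp
  also have "\<dots> = B x x + B x y + (B y x + B y y)" using la_addL[OF L] la_addR[OF L] by simp
  finally show ?thesis using la_self[OF L] by (simp add: eq_neg_iff_add_eq_0)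
qed
lemma la_negL: "lie_algebra B \<Longrightarrow> B (- x) y = - B x y"
  using la_addL[of B x "-x" y] la_zeroL[of B y] by (simp add: eq_neg_iff_add_eq_0 add.commute)
lemma la_deriv: "lie_algebra B \<Longrightarrow> B a (B x y) = B (B a x) y + B x (B a y)"
proof -
  assume L: "lie_algebra B"
  have "B a (B x y) + B x (B y a) + B y (B a x) = 0" by (rule la_jac[OF L])
  moreover have "B x (B y a) = - B x (B a y)" using la_anti[OF L, of y a] 
    by (metis L la_negL la_anti)
  moreover have "B y (B a x) = - B (B a x) y" using la_anti[OF L] by blast
  ultimately show ?thesis by (simp add: algebra_simps eq_neg_iff_add_eq_0)
qed

lemma bracket_span:
  assumes L: "lie_algebra B"
  shows "lie_bracket_sub B (vec.span S) (vec.span T) = vec.span {B u v | u v. u \<in> S \<and> v \<in> T}"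
proof (rule antisym)
  let ?W = "vec.span {B u v | u v. u \<in> S \<and> v \<in> T}"
  have 1: "B u v \<in> ?W" if "u \<in> vec.span S" "v \<in> T" for u v
    using that(1)
  proof (induction rule: vec.span_induct)
    case base
    then show ?case unfolding vec.subspace_def
      by (auto simp: la_zeroL[OF L] la_addL[OF L] la_scL[OF L] intro: vec.span_add vec.span_scale vec.span_zero)
  next
    case (step x) then show ?case using that(2) by (auto intro: vec.span_base)
  qed
  have 2: "B u v \<in> ?W" if "u \<in> vec.span S" "v \<in> vec.span T" for u v
    using that(2)
  proof (induction rule: vec.span_induct)
    case base
    then show ?case unfolding vec.subspace_def
      by (auto simp: la_zeroR[OF L] la_addR[OF L] la_scR[OF L] intro: vec.span_add vec.span_scale vec.span_zero)
  next
    case (step x) then show ?case using 1 that(1) by blast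
  qed
  show "lie_bracket_sub B (vec.span S) (vec.span T) \<subseteq> ?W"
    unfolding lie_bracket_sub_def using 2
    by (intro vec.span_minimal) auto
  show "?W \<subseteq> lie_bracket_sub B (vec.span S) (vec.span T)"
    unfolding lie_bracket_sub_def by (intro vec.span_mono) (auto intro: vec.span_base)
qed



lemma split_sum24:
  fixes f :: "nat \<Rightarrow> complex"
  assumes "3 \<le> N"
  shows "(\<Sum>l=2..N. f l) = f 2 + f 3 + (\<Sum>l=4..N. f l)"
proof -
  have "{2..N} = {2,3} \<union> {4..N}" using assms by auto
  then show ?thesis by (simp add: sum.union_disjoint)
qed

lemma split_sum_tail:
  fixes f :: "nat \<Rightarrow> complex"
  assumes "a \<le> M" "M \<le> N" "\<And>l. M < l \<Longrightarrow> l \<le> N \<Longrightarrow> f l = 0"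
  shows "(\<Sum>l=a..N. f l) = (\<Sum>l=a..M. f l)"
proof -
  have "{a..N} = {a..M} \<union> {M<..N}" using assms by auto
  then have "(\<Sum>l=a..N. f l) = (\<Sum>l=a..M. f l) + (\<Sum>l\<in>{M<..N}. f l)"
    by (metis sum.union_disjoint finite_atLeastAtMost finite_greaterThanAtMost ivl_disj_int_two(8))
  also have "(\<Sum>l\<in>{M<..N}. f l) = 0" using assms(3) by (intro sum.neutral) auto
  finally show ?thesis by simp
qed

lemma split1:
  fixes f :: "nat \<Rightarrow> complex"
  assumes "1 \<le> N"
  shows "(\<Sum>l=1..N. f l) = f 1 + (\<Sum>l=2..N. f l)"
proof -
  have "{1..N} = insert 1 {2..N}" using assms by auto
  then show ?thesis by simp
qed

lemma HP_arith:
  fixes D :: "nat \<Rightarrow> nat \<Rightarrow> nat" and t s :: complex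
  assumes n6: "6 \<le> n" and nN: "n \<le> N"
    and D1: "\<And>l. 1 \<le> l \<Longrightarrow> D 1 l = n - (l+1)"
    and D2: "\<And>k. 2 \<le> k \<Longrightarrow> D k 1 = n - (k+1)"
    and D3: "\<And>k l. 2 \<le> k \<Longrightarrow> 2 \<le> l \<Longrightarrow>
        D k l = (if (k = 2 \<and> l = 2) \<or> (k = 2 \<and> l = 3) \<or> (k = 3 \<and> l = 2) then 1 else 0)"
  shows "(\<Sum>k=1..N. \<Sum>l=1..N. of_nat (D k l) * t ^ k * s ^ l) =
     HP0 n t s + t^2 * s^3 + t^3 * s^2 + t^2 * s^2"
proof -
  let ?F = "\<lambda>k l. of_nat (D k l) * t ^ k * s ^ l"
  have N1: "1 \<le> N" using n6 nN by simp
  have D2s: "D k (Suc 0) = n - Suc k" if "2 \<le> k" for k using D2[OF that] by simp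
  have D1s: "D (Suc 0) l = n - Suc l" if "1 \<le> l" for l using D1[OF that] by simp
  have row1: "(\<Sum>l=1..N. ?F 1 l) = of_nat (n-2) * t * s + (\<Sum>l=2..n-2. of_nat (n-l-1) * (t * s^l))"
  proof -
    have "(\<Sum>l=1..N. ?F 1 l) = ?F 1 1 + (\<Sum>l=2..N. ?F 1 l)"
      using split1[OF N1] by simp
    also have "(\<Sum>l=2..N. ?F 1 l) = (\<Sum>l=2..n-2. ?F 1 l)"
      proof (rule split_sum_tail)
      fix l assume "n - 2 < l" "l \<le> N"
      then have "D 1 l = 0" using D1[of l] by simp
      then show "?F 1 l = 0" by simp
    qed (use n6 nN in auto)
    also have "\<dots> = (\<Sum>l=2..n-2. of_nat (n-l-1) * (t * s^l))"
      by (intro sum.cong) (auto simp: D1s)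
    finally show ?thesis using D1s[of 1] by (simp add: numeral_2_eq_2)
  qed
  have rowk: "(\<Sum>l=1..N. ?F k l) = of_nat (n-k-1) * (t^k * s) + (\<Sum>l=2..N. ?F k l)" if "2 \<le> k" for k
    using split1[OF N1, of "?F k"] that by (simp add: D2s)
  have rest: "(\<Sum>k=2..N. \<Sum>l=2..N. ?F k l) = t^2 * s^3 + t^3 * s^2 + t^2 * s^2"
  proof -
    have N3: "3 \<le> N" using n6 nN by simp
    have z: "(\<Sum>l=4..N. ?F k l) = 0" if "2 \<le> k" for k
      by (intro sum.neutral) (use that in \<open>auto simp: D3\<close>)
    have inner: "(\<Sum>l=2..N. ?F k l) = ?F k 2 + ?F k 3" if "2 \<le> k" for k
      using split_sum24[OF N3, of "?F k"] z[OF that] by simp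
    have "(\<Sum>k=2..N. \<Sum>l=2..N. ?F k l) = (\<Sum>k=2..N. ?F k 2 + ?F k 3)"
      by (intro sum.cong) (auto simp: inner)
    also have "\<dots> = (?F 2 2 + ?F 2 3) + (?F 3 2 + ?F 3 3) + (\<Sum>k=4..N. ?F k 2 + ?F k 3)"
      by (rule split_sum24[OF N3])
    also have "(\<Sum>k=4..N. ?F k 2 + ?F k 3) = 0"
      by (intro sum.neutral) (auto simp: D3)
    finally show ?thesis by (simp add: D3 algebra_simps)
  qed
  have colk: "(\<Sum>k=2..N. of_nat (n-k-1) * (t^k * s)) = (\<Sum>k=2..n-2. of_nat (n-k-1) * (t^k * s))"
    using n6 nN by (intro split_sum_tail) auto
  have "(\<Sum>k=1..N. \<Sum>l=1..N. ?F k l) = (\<Sum>l=1..N. ?F 1 l) + (\<Sum>k=2..N. \<Sum>l=1..N. ?F k l)"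
    using split1[OF N1] by simp
  also have "(\<Sum>k=2..N. \<Sum>l=1..N. ?F k l) = (\<Sum>k=2..N. of_nat (n-k-1) * (t^k * s)) + (\<Sum>k=2..N. \<Sum>l=2..N. ?F k l)"
    by (subst sum.distrib[symmetric], rule sum.cong[OF refl], rule rowk, simp)
  finally show ?thesis
    unfolding row1 colk rest HP0_def by (simp add: sum.distrib algebra_simps)
qed



lemma lcs_step_mem:
  fixes B :: "'n::finite lie_bracket"
  assumes L: "lie_algebra B" and ad: "adapted_basis B e"
    and m: "e (j+1) \<in> lcs B (Suc m)" and j: "2 \<le> j" "j + 1 \<le> CARD('n)"
  shows "e j \<in> lcs B (Suc (Suc m))"
proof -
  have H: "\<forall>h. 3 \<le> h \<and> h \<le> CARD('n) \<longrightarrow> B (e 1) (e h) = e (h - 1)"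
    using ad unfolding adapted_basis_def by blast
  have "B (e 1) (e (j+1)) = e j" using H[rule_format, of "j+1"] j by simp
  then have "e j = - B (e (j+1)) (e 1)" using la_anti[OF L] by metis
  moreover have "B (e (j+1)) (e 1) \<in> lcs B (Suc (Suc m))"
    using m unfolding lcs.simps lie_bracket_sub_def by (auto intro!: vec.span_base)
  ultimately show ?thesis unfolding lie_bracket_sub_def lcs.simps by (simp add: vec.span_neg)
qed

lemma lcs_mem:
  fixes B :: "'n::finite lie_bracket"
  assumes L: "lie_algebra B" and ad: "adapted_basis B e"
  shows "2 \<le> j \<Longrightarrow> j + m + 2 \<le> CARD('n) + 1 \<Longrightarrow> e j \<in> lcs B (Suc (Suc m))"
proof (induction m arbitrary: j)
  case 0
  then show ?case using lcs_step_mem[OF L ad, of j 0] by simp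
next
  case (Suc m)
  then have "e (j+1) \<in> lcs B (Suc (Suc m))" by simp
  then show ?case using lcs_step_mem[OF L ad, of j "Suc m"] Suc.prems by simp
qed

lemma lcs_eq_le:
  fixes B :: "'n::finite lie_bracket"
  assumes F: "filiform B" and ad: "adapted_basis B e" and k: "2 \<le> k" "k \<le> CARD('n)"
  shows "lcs B k = vec.span (e ` {2..CARD('n)+1-k})"
proof -
  have L: "lie_algebra B" using F filiform_def by blast
  obtain m where km: "k = Suc (Suc m)" using k(1) by (metis add_2_eq_Suc le_Suc_ex)
  let ?S = "e ` {2..CARD('n)+1-k}"
  have sub: "?S \<subseteq> lcs B k" using lcs_mem[OF L ad] km k by auto
  have ind: "vec.independent ?S"
    using ad k unfolding adapted_basis_def by (elim conjE vec.independent_mono) auto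
  have inj: "inj_on e {2..CARD('n)+1-k}"
    using ad k unfolding adapted_basis_def by (elim conjE inj_on_subset) auto
  have card: "card ?S = CARD('n) - k" using card_image[OF inj] k by simp
  have dim: "vec.dim (lcs B k) = CARD('n) - k" using F k unfolding filiform_def by blast
  have subsp: "vec.subspace (lcs B k)" using km
    by (simp add: lie_bracket_sub_def vec.subspace_span)
  have "lcs B k \<subseteq> vec.span ?S"
    by (rule vec.card_ge_dim_independent[OF sub ind]) (metis card dim order_refl)
  moreover have "vec.span ?S \<subseteq> lcs B k" by (rule vec.span_minimal[OF sub subsp])
  ultimately show ?thesis by blast
qed

lemma lcs_eq:
  fixes B :: "'n::finite lie_bracket"
  assumes F: "filiform B" and ad: "adapted_basis B e" and k: "2 \<le> k"
  shows "lcs B k = vec.span (e ` {2..CARD('n)+1-k})"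
proof (cases "k \<le> CARD('n)")
  case True then show ?thesis using lcs_eq_le[OF F ad k] by simp
next
  case False
  have L: "lie_algebra B" using F filiform_def by blast
  have n2: "2 \<le> CARD('n)" using F filiform_def by blast
  have "lcs B (CARD('n) + d) = {0}" for d
  proof (induction d)
    case 0 then show ?case using lcs_eq_le[OF F ad n2] by simp
  next
    case (Suc d)
    obtain m where m: "CARD('n) + d = Suc m" using n2 by (metis add_Suc le_Suc_ex numeral_2_eq_2)
    have "lcs B (CARD('n) + Suc d) = lie_bracket_sub B (lcs B (CARD('n) + d)) UNIV"
      using m by simp
    also have "\<dots> = lie_bracket_sub B (vec.span {}) (vec.span UNIV)" using Suc by simp
    also have "\<dots> = {0}" by (simp only: bracket_span[OF L]) simp
    finally show ?case .
  qed
  from this[of "k - CARD('n)"] False show ?thesis by simp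
qed

lemma dim_lcs:
  fixes B :: "'n::finite lie_bracket"
  assumes F: "filiform B" and ad: "adapted_basis B e" and k: "2 \<le> k"
  shows "vec.dim (lcs B k) = CARD('n) - k"
proof -
  have ind: "vec.independent (e ` {2..CARD('n)+1-k})"
    using ad k unfolding adapted_basis_def by (elim conjE vec.independent_mono) auto
  have inj: "inj_on e {2..CARD('n)+1-k}"
    using ad k unfolding adapted_basis_def by (elim conjE inj_on_subset) auto
  show ?thesis unfolding lcs_eq[OF F ad k] vec.dim_span_eq_card_independent[OF ind]
    using card_image[OF inj] by simp
qed



lemma bracket_sub_comm:
  assumes L: "lie_algebra B"
  shows "lie_bracket_sub B U V = lie_bracket_sub B V U"
proof -
  have *: "lie_bracket_sub B U V \<subseteq> lie_bracket_sub B V U" for U V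
    unfolding lie_bracket_sub_def
  proof (rule vec.span_minimal[OF _ vec.subspace_span], safe)
    fix u v assume "u \<in> U" "v \<in> V"
    then have "B v u \<in> vec.span {B u v |u v. u \<in> V \<and> v \<in> U}" by (auto intro: vec.span_base)
    then have "- B v u \<in> vec.span {B u v |u v. u \<in> V \<and> v \<in> U}" by (rule vec.span_neg)
    then show "B u v \<in> vec.span {B u v |u v. u \<in> V \<and> v \<in> U}" using la_anti[OF L, of u v] by simp
  qed
  show ?thesis using *[of U V] *[of V U] by blast
qed

lemma dim_one:
  fixes w :: "complex^'n::finite"
  assumes "w \<noteq> 0" "T \<subseteq> vec.span {w}" "w \<in> vec.span T"
  shows "vec.dim (vec.span T) = 1"
proof -
  have "vec.span T = vec.span {w}"
  proof (rule antisym)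
    show "vec.span T \<subseteq> vec.span {w}" by (rule vec.span_minimal[OF assms(2) vec.subspace_span])
    show "vec.span {w} \<subseteq> vec.span T" using assms(3) by (intro vec.span_minimal vec.subspace_span) auto
  qed
  moreover have "vec.independent {w}" using assms(1) by (simp add: vec.independent_insert)
  ultimately show ?thesis by (simp add: vec.dim_span_eq_card_independent)
qed

lemma dim_zero:
  fixes T :: "(complex^'n::finite) set"
  assumes "T \<subseteq> {0}"
  shows "vec.dim (vec.span T) = 0"
proof -
  have "vec.span T \<subseteq> vec.span {}" using assms
    by (intro vec.span_minimal vec.subspace_span) auto
  then have "vec.span T \<subseteq> {0}" by simp
  then show ?thesis by (simp only: vec.dim_eq_0)
qed


context
  fixes B :: "'n::finite lie_bracket" and e :: "nat \<Rightarrow> complex^'n" and n :: nat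
  assumes n_def: "n = CARD('n)"
    and n6: "6 \<le> n"
    and F: "filiform B"
    and ad: "adapted_basis B e"
    and trip: "has_triple B e (CARD('n) - 2) (CARD('n) - 2)"
begin

lemma L: "lie_algebra B" using F filiform_def by blast
lemma H1: "\<And>h. 3 \<le> h \<Longrightarrow> h \<le> n \<Longrightarrow> B (e 1) (e h) = e (h - 1)"
    using ad unfolding adapted_basis_def n_def by blast
lemma H2: "\<And>h. 1 \<le> h \<Longrightarrow> h \<le> n \<Longrightarrow> B (e 2) (e h) = 0"
    using ad unfolding adapted_basis_def n_def by blast
lemma H3: "\<And>h. 2 \<le> h \<Longrightarrow> h \<le> n \<Longrightarrow> B (e 3) (e h) = 0"
    using ad unfolding adapted_basis_def n_def by blast
lemma T1: "is_min_ge4 (\<lambda>k. k \<le> n \<and> B (e k) (e n) \<noteq> 0) (n - 2)"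
    using trip unfolding has_triple_def n_def by blast
lemma T2: "is_min_ge4 (\<lambda>k. k + 1 \<le> n \<and> B (e k) (e (k + 1)) \<noteq> 0) (n - 2)"
    using trip unfolding has_triple_def n_def by blast
lemma w0: "B (e (n-2)) (e (n-1)) \<noteq> 0"
  proof -
    have "B (e (n-2)) (e (n-2+1)) \<noteq> 0" using T2 unfolding is_min_ge4_def by blast
    moreover have "n-2+1 = n-1" using n6 by simp
    ultimately show ?thesis by simp
  qed
lemma zn: assumes "2 \<le> i" "i \<le> n - 3" shows "B (e i) (e n) = 0"
  proof -
  have "i = 2 \<or> i = 3 \<or> 4 \<le> i" using assms by linarith
    then consider "i = 2" | "i = 3" | "4 \<le> i" by blast
    then show ?thesis
    proof cases
      case 1 then show ?thesis using H2[of n] n6 by simp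
    next
      case 2 then show ?thesis using H3[of n] n6 by simp
    next
      case 3 then show ?thesis using T1 assms n6 unfolding is_min_ge4_def by auto
    qed
  qed
lemma zs: assumes "2 \<le> i" "i \<le> n - 3" shows "B (e i) (e (i+1)) = 0"
  proof -
  have "i = 2 \<or> i = 3 \<or> 4 \<le> i" using assms by linarith
    then consider "i = 2" | "i = 3" | "4 \<le> i" by blast
    then show ?thesis
    proof cases
      case 1 then show ?thesis using H2[of 3] n6 by simp
    next
      case 2 then show ?thesis using H3[of 4] n6 by simp
    next
      case 3 then show ?thesis using T2 assms n6 unfolding is_min_ge4_def by auto
    qed
  qed
lemma der: assumes "2 \<le> a" "a + 1 \<le> n" "3 \<le> b" "b \<le> n"
  shows "B (e a) (e b) = B (e 1) (B (e (a+1)) (e b)) - B (e (a+1)) (e (b-1))"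
  proof -
  have "B (e 1) (B (e (a+1)) (e b)) = B (B (e 1) (e (a+1))) (e b) + B (e (a+1)) (B (e 1) (e b))"
      by (rule la_deriv[OF L])
    also have "\<dots> = B (e a) (e b) + B (e (a+1)) (e (b-1))" using H1[of "a+1"] H1[of b] assms by simp
    finally show ?thesis by simp
  qed
lemma fa: assumes "2 \<le> i" "i \<le> n - 3" shows "B (e i) (e (n-1)) = 0"
  proof (cases "i = 2")
    case True then show ?thesis using H2[of "n-1"] n6 by simp
  next
    case False
  have "B (e (i-1)) (e n) = B (e 1) (B (e (i-1+1)) (e n)) - B (e (i-1+1)) (e (n-1))"
      using der[of "i-1" n] assms n6 False by simp
    moreover have "B (e (i-1)) (e n) = 0" using zn[of "i-1"] assms False by simp
    moreover have "B (e i) (e n) = 0" using zn[of i] assms by simp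
    ultimately show ?thesis using False assms by (simp add: la_zeroR[OF L])
  qed
lemma fb: "2 \<le> i \<Longrightarrow> i + d \<le> n - 2 \<Longrightarrow> B (e i) (e (i+d)) = 0"
  proof (induction d arbitrary: i rule: less_induct)
    case (less d i)
  have "d = 0 \<or> d = 1 \<or> 2 \<le> d" by linarith
    then consider "d = 0" | "d = 1" | "2 \<le> d" by blast
    then show ?case
    proof cases
      case 1 then show ?thesis by (simp add: la_self[OF L])
    next
      case 2 then show ?thesis using zs[of i] less.prems by simp
    next
      case 3
    have a0: "B (e (i+1)) (e (i+1+(d-1))) = 0" by (rule less.IH[of "d-1" "i+1"]) (use less.prems 3 in linarith)+
    have eqa: "i+1+(d-1) = i+d" using 3 by simp
    have a: "B (e (i+1)) (e (i+d)) = 0" using a0 unfolding eqa .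
    have b0: "B (e (i+1)) (e (i+1+(d-2))) = 0" by (rule less.IH[of "d-2" "i+1"]) (use less.prems 3 in linarith)+
    have eq: "i+1+(d-2) = i+d-1" using 3 by simp
    have b: "B (e (i+1)) (e (i+d-1)) = 0" using b0 unfolding eq .
    have "B (e i) (e (i+d)) = B (e 1) (B (e (i+1)) (e (i+d))) - B (e (i+1)) (e (i+d-1))"
        by (rule der) (use less.prems 3 in linarith)+
      also have "\<dots> = 0" by (simp only: a b la_zeroR[OF L] diff_zero)
      finally show ?thesis .
    qed
  qed
lemma fb2: assumes "2 \<le> i" "2 \<le> j" "i \<le> n - 2" "j \<le> n - 2" shows "B (e i) (e j) = 0"
  proof (cases "i \<le> j")
    case True then show ?thesis using fb[of i "j-i"] assms by simp
  next
    case False then have "B (e j) (e i) = 0" using fb[of j "i-j"] assms by simp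
    then show ?thesis using la_anti[OF L, of "e i" "e j"] by simp
  qed
lemma Fall: assumes "2 \<le> i" "2 \<le> j" "i \<le> n - 1" "j \<le> n - 1"
  shows "B (e i) (e j) = (if i = n-2 \<and> j = n-1 then B (e (n-2)) (e (n-1)) else if i = n-1 \<and> j = n-2 then - B (e (n-2)) (e (n-1)) else 0)"
proof -
  have fa2: "B (e (n-1)) (e k) = 0" if "2 \<le> k" "k \<le> n - 3" for k
    using fa[OF that] la_anti[OF L, of "e (n-1)" "e k"] by simp
  have ci: "i \<le> n-3 \<or> i = n-2 \<or> i = n-1" using assms n6 by linarith
  have cj: "j \<le> n-3 \<or> j = n-2 \<or> j = n-1" using assms n6 by linarith
  have nn: "n-3 < n-2" "n-2 < n-1" using n6 by auto
  show ?thesis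
  proof (cases "i = n-2 \<and> j = n-1")
    case True then show ?thesis by simp
  next
    case F1: False
    show ?thesis
    proof (cases "i = n-1 \<and> j = n-2")
      case True
      then show ?thesis using la_anti[OF L, of "e (n-1)" "e (n-2)"] nn by simp
    next
      case F2: False
      have "B (e i) (e j) = 0"
      proof (cases "i = n-1")
        case Ti: True
        then have "j \<le> n-3 \<or> j = n-1" using cj F2 by blast
        then show ?thesis
        proof
          assume "j \<le> n-3" then show ?thesis using fa2[of j] Ti assms by simp
        next
          assume "j = n-1" then show ?thesis using Ti la_self[OF L] by simp
        qed
      next
        case Fi: False
        then have i2: "i \<le> n-2" using ci nn by linarith
        show ?thesis
        proof (cases "j = n-1")
          case Tj: True
          then have "i \<le> n-3" using F1 i2 nn by linarith
          then show ?thesis using fa[of i] Tj assms by simp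
        next
          case False
          then have "j \<le> n-2" using cj nn by linarith
          then show ?thesis using fb2[of i j] i2 assms by simp
        qed
      qed
      then show ?thesis by (simp only: if_not_P[OF F1] if_not_P[OF F2])
    qed
  qed
qed


lemma D1: assumes l1: "1 \<le> l" shows "vec.dim (lie_bracket_sub B (lcs B 1) (lcs B l)) = n - (l+1)"
proof -
  obtain m where m: "l = Suc m" using l1 by (cases l) auto
  have "lie_bracket_sub B (lcs B 1) (lcs B l) = lie_bracket_sub B (lcs B l) UNIV"
    using bracket_sub_comm[OF L, of "lcs B 1" "lcs B l"] by simp
  also have "\<dots> = lcs B (Suc l)" using m by simp
  finally have eq: "lie_bracket_sub B (lcs B 1) (lcs B l) = lcs B (Suc l)" .
  have "vec.dim (lcs B (Suc l)) = CARD('n) - Suc l" using dim_lcs[OF F ad, of "Suc l"] l1 by simp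
  then show ?thesis unfolding eq n_def by simp
qed

lemma D2: assumes k2: "2 \<le> k" shows "vec.dim (lie_bracket_sub B (lcs B k) (lcs B 1)) = n - (k+1)"
proof -
  obtain m where m: "k = Suc m" using k2 by (cases k) auto
  have eq: "lie_bracket_sub B (lcs B k) (lcs B 1) = lcs B (Suc k)"
    using m by simp
  have "vec.dim (lcs B (Suc k)) = CARD('n) - Suc k" using dim_lcs[OF F ad, of "Suc k"] k2 by simp
  then show ?thesis unfolding eq n_def by simp
qed

lemma D3: assumes k: "2 \<le> k" and l: "2 \<le> l"
  shows "vec.dim (lie_bracket_sub B (lcs B k) (lcs B l)) =
    (if (k = 2 \<and> l = 2) \<or> (k = 2 \<and> l = 3) \<or> (k = 3 \<and> l = 2) then 1 else 0)"
proof -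
  define w where "w = B (e (n-2)) (e (n-1))"
  define T where "T = {B u v | u v. u \<in> e ` {2..n+1-k} \<and> v \<in> e ` {2..n+1-l}}"
  have DT: "vec.dim (lie_bracket_sub B (lcs B k) (lcs B l)) = vec.dim (vec.span T)"
    unfolding T_def lcs_eq[OF F ad k] lcs_eq[OF F ad l] bracket_span[OF L] n_def ..
  have Tm: "x \<in> T \<longleftrightarrow> (\<exists>i j. 2 \<le> i \<and> i \<le> n+1-k \<and> 2 \<le> j \<and> j \<le> n+1-l \<and> x = B (e i) (e j))" for x
    unfolding T_def mem_Collect_eq image_iff atLeastAtMost_iff Bex_def by blast
  have Fw: "B (e i) (e j) = (if i = n-2 \<and> j = n-1 then w else if i = n-1 \<and> j = n-2 then -w else 0)"
    if "2 \<le> i" "i \<le> n+1-k" "2 \<le> j" "j \<le> n+1-l" for i j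
    unfolding w_def by (rule Fall) (use that k l in linarith)+
  have w0': "w \<noteq> 0" unfolding w_def by (rule w0)
  have nf: "2 \<le> n - 1" "2 \<le> n - 2" "n - 1 \<le> n + 1 - 2" "n - 2 \<le> n + 1 - 3" "n - 2 \<le> n + 1 - 2" "n - Suc 0 \<noteq> n - 2"
    using n6 by auto
  have Tsub: "T \<subseteq> vec.span {w}"
  proof
    fix x assume "x \<in> T"
    then obtain i j where ij: "2 \<le> i" "i \<le> n+1-k" "2 \<le> j" "j \<le> n+1-l" "x = B (e i) (e j)"
      using Tm by blast
    then have "x = (if i = n-2 \<and> j = n-1 then w else if i = n-1 \<and> j = n-2 then -w else 0)"
      using Fw[OF ij(1-4)] by simp
    then show "x \<in> vec.span {w}"
      by (auto intro: vec.span_base vec.span_neg vec.span_zero)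
  qed
  show ?thesis
  proof (cases "(k = 2 \<and> l = 2) \<or> (k = 2 \<and> l = 3) \<or> (k = 3 \<and> l = 2)")
    case True
    have "w \<in> T \<or> -w \<in> T"
    proof (cases "k = 2 \<and> l = 3")
      case T23: True
      have mem: "B (e (n-1)) (e (n-2)) \<in> T" unfolding Tm
        by (rule exI[of _ "n-1"], rule exI[of _ "n-2"]) (use T23 nf in simp)
      have "B (e (n-1)) (e (n-2)) = -w" using Fw[of "n-1" "n-2"] T23 nf by simp
      then show ?thesis using mem by simp
    next
      case False
      then have kl: "k \<le> 3" "l = 2" using True by auto
      have "B (e (n-2)) (e (n-1)) \<in> T" unfolding Tm
        by (rule exI[of _ "n-2"], rule exI[of _ "n-1"]) (use kl nf in auto)
      then show ?thesis using w_def by simp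
    qed
    then have "w \<in> vec.span T"
      by (metis minus_minus vec.span_base vec.span_neg)
    then show ?thesis using DT dim_one[OF w0' Tsub] True by simp
  next
    case False
    have "T \<subseteq> {0}"
    proof
      fix x assume "x \<in> T"
      then obtain i j where ij: "2 \<le> i" "i \<le> n+1-k" "2 \<le> j" "j \<le> n+1-l" "x = B (e i) (e j)"
        using Tm by blast
      have c1: "\<not> (i = n-2 \<and> j = n-1)" "\<not> (i = n-1 \<and> j = n-2)"
        using False ij k l n6 by auto
      have "x = (if i = n-2 \<and> j = n-1 then w else if i = n-1 \<and> j = n-2 then -w else 0)"
        using Fw[OF ij(1-4)] ij(5) by simp
      also have "\<dots> = 0" by (simp only: if_not_P[OF c1(1)] if_not_P[OF c1(2)])
      finally show "x \<in> {0}" by simp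
    qed
    then have "vec.dim (vec.span T) = 0" by (rule dim_zero)
    then show ?thesis using DT by (simp only: if_not_P[OF False])
  qed
qed

lemma main_eq: assumes nN: "n \<le> N"
  shows "HP_trunc B N t s = HP0 n t s + t^2 * s^3 + t^3 * s^2 + t^2 * s^2"
  unfolding HP_trunc_def
  by (rule HP_arith[where D = "\<lambda>k l. vec.dim (lie_bracket_sub B (lcs B k) (lcs B l))", OF n6 nN D1 D2 D3])

end

theorem mainTheorem11:
  fixes B :: "'n::finite lie_bracket"
  assumes "CARD('n) \<ge> 6"
    and "filiform B"
    and "adapted_basis B e"
    and "has_triple B e (CARD('n) - 2) (CARD('n) - 2)"
  shows "\<forall>N \<ge> CARD('n). \<forall>t s. HP_trunc B N t s =
           HP0 (CARD('n)) t s + t^2 * s^3 + t^3 * s^2 + t^2 * s^2"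
proof (intro allI impI)
  fix N :: nat and t s :: complex
  assume nN: "CARD('n) \<le> N"
  show "HP_trunc B N t s = HP0 (CARD('n)) t s + t^2 * s^3 + t^3 * s^2 + t^2 * s^2"
    by (rule main_eq[OF refl assms(1) assms(2) assms(3) assms(4) nN])
qed

end
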